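(* Let $(X,G)$ be a symmetric $G$-metric space and $T:X\to X$. Suppose $X$ is $T$-orbitally complete and $T$ is orbitally continuous and injective, and that there exist a non-negative real-valued function $a:X\times X\times X\to[0,\infty)$ with $a(x,y,y)=0$ for all $x,y$, and a function $h:[0,\infty)^3\to[0,\infty)$ that is upper semicontinuous, nondecreasing in each variable and satisfies $h(t,t,t)<t$ for all $t>0$, such that for all $x,y,z\in X$ with $x\neq y$, \[ G(Tx,Ty,Tz)\le h\Big(G(x,y,z),\ [G(x,y,z)G(Tx,Ty,Tz)]^{-1}G(x,Tx,Tx)G(y,Ty,Ty)G(z,Tz,Tz),\ a(x,y,z)G(Tx,y,z)G(x,Ty,z)G(x,y,Tz)\Big). \] Then for each $x\in X$ the sequence $(T^nx)$ $G$-converges to some $u_x\in X$ and $Tu_x=u_x$. If in addition $a(x,y,z)\le[G(x,y,z)G(Tx,Ty,Tz)]^{-1}$ (for all $x,y,z\in X$ with $x\ne y$), then $T$ has a unique fixed point.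
   Context: A $G$-metric space is a nonempty set $X$ with a function $G:X\times X\times X\to[0,\infty)$ such that: (G1) $G(x,y,z)=0$ if $x=y=z$; (G2) $G(x,x,y)>0$ whenever $x\neq y$; (G3) $G(x,x,y)\le G(x,y,z)$ whenever $z\neq y$; (G4) $G$ is symmetric in all three variables; (G5) $G(x,y,z)\le G(x,a,a)+G(a,y,z)$ for all $x,y,z,a\in X$. It is symmetric if $G(x,y,y)=G(x,x,y)$ for all $x,y$. A sequence $(x_n)$ $G$-converges to $x$ if $G(x,x_n,x_m)\to 0$ as $n,m\to\infty$ (equivalently $G(x_n,x,x)\to0$); it is $G$-Cauchy if for every $\varepsilon>0$ there is $N$ with $G(x_n,x_m,x_m)<\varepsilon$ for all $n,m\ge N$. For $a\in X$ let $I(a,T)=\{a,Ta,T^2a,\dots\}$. $T$ is orbitally continuous if whenever $T^{n_i}x\to x^*$ ($G$-convergence) for some $x$ and some increasing sequence $(n_i)$, then $TT^{n_i}x\to Tx^*$. $X$ is $T$-orbitally complete if for every $a\in X$, every $G$-Cauchy sequence contained in $I(a,T)$ $G$-converges in $X$. *)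

theory Defs
  imports "HOL-Analysis.Analysis"
begin

definition G_metric :: "'a set \<Rightarrow> ('a \<Rightarrow> 'a \<Rightarrow> 'a \<Rightarrow> real) \<Rightarrow> bool" where
  "G_metric X G \<longleftrightarrow> X \<noteq> {} \<and>
    (\<forall>x\<in>X. \<forall>y\<in>X. \<forall>z\<in>X. G x y z \<ge> 0) \<and>
    (\<forall>x\<in>X. G x x x = 0) \<and>
    (\<forall>x\<in>X. \<forall>y\<in>X. x \<noteq> y \<longrightarrow> G x x y > 0) \<and>
    (\<forall>x\<in>X. \<forall>y\<in>X. \<forall>z\<in>X. z \<noteq> y \<longrightarrow> G x x y \<le> G x y z) \<and>
    (\<forall>x\<in>X. \<forall>y\<in>X. \<forall>z\<in>X. G x y z = G x z y \<and> G x y z = G y x z \<and> G x y z = G y z x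
        \<and> G x y z = G z x y \<and> G x y z = G z y x) \<and>
    (\<forall>x\<in>X. \<forall>y\<in>X. \<forall>z\<in>X. \<forall>a\<in>X. G x y z \<le> G x a a + G a y z)"

definition symmetric_G :: "'a set \<Rightarrow> ('a \<Rightarrow> 'a \<Rightarrow> 'a \<Rightarrow> real) \<Rightarrow> bool" where
  "symmetric_G X G \<longleftrightarrow> (\<forall>x\<in>X. \<forall>y\<in>X. G x y y = G x x y)"

definition G_converges :: "('a \<Rightarrow> 'a \<Rightarrow> 'a \<Rightarrow> real) \<Rightarrow> (nat \<Rightarrow> 'a) \<Rightarrow> 'a \<Rightarrow> bool" where
  "G_converges G s x \<longleftrightarrow> (\<forall>e>0. \<exists>N. \<forall>n m. N \<le> n \<and> N \<le> m \<longrightarrow> G x (s n) (s m) < e)"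

definition G_Cauchy :: "('a \<Rightarrow> 'a \<Rightarrow> 'a \<Rightarrow> real) \<Rightarrow> (nat \<Rightarrow> 'a) \<Rightarrow> bool" where
  "G_Cauchy G s \<longleftrightarrow> (\<forall>e>0. \<exists>N. \<forall>n m. N \<le> n \<and> N \<le> m \<longrightarrow> G (s n) (s m) (s m) < e)"

definition orbit :: "'a \<Rightarrow> ('a \<Rightarrow> 'a) \<Rightarrow> 'a set" where
  "orbit a T = {(T ^^ n) a | n. True}"

definition orbitally_continuous :: "'a set \<Rightarrow> ('a \<Rightarrow> 'a \<Rightarrow> 'a \<Rightarrow> real) \<Rightarrow> ('a \<Rightarrow> 'a) \<Rightarrow> bool" where
  "orbitally_continuous X G T \<longleftrightarrow>
    (\<forall>x\<in>X. \<forall>x'\<in>X. \<forall>n::nat \<Rightarrow> nat. strict_mono n \<and> G_converges G (\<lambda>i. (T ^^ n i) x) x'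
       \<longrightarrow> G_converges G (\<lambda>i. T ((T ^^ n i) x)) (T x'))"

definition orbitally_complete :: "'a set \<Rightarrow> ('a \<Rightarrow> 'a \<Rightarrow> 'a \<Rightarrow> real) \<Rightarrow> ('a \<Rightarrow> 'a) \<Rightarrow> bool" where
  "orbitally_complete X G T \<longleftrightarrow>
    (\<forall>a\<in>X. \<forall>s. range s \<subseteq> orbit a T \<and> G_Cauchy G s \<longrightarrow> (\<exists>x\<in>X. G_converges G s x))"

definition usc3_nonneg :: "(real \<Rightarrow> real \<Rightarrow> real \<Rightarrow> real) \<Rightarrow> bool" where
  "usc3_nonneg h \<longleftrightarrow>
    (\<forall>p\<in>{0..}. \<forall>q\<in>{0..}. \<forall>r\<in>{0..}. \<forall>c. h p q r < c \<longrightarrow>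
       (\<exists>d>0. \<forall>p'\<in>{0..}. \<forall>q'\<in>{0..}. \<forall>r'\<in>{0..}.
          dist (p', q', r') (p, q, r) < d \<longrightarrow> h p' q' r' < c))"

definition mono3_nonneg :: "(real \<Rightarrow> real \<Rightarrow> real \<Rightarrow> real) \<Rightarrow> bool" where
  "mono3_nonneg h \<longleftrightarrow>
    (\<forall>p p' q q' r r'. 0 \<le> p \<and> p \<le> p' \<and> 0 \<le> q \<and> q \<le> q' \<and> 0 \<le> r \<and> r \<le> r'
       \<longrightarrow> h p q r \<le> h p' q' r')"

end

theory Submission
  imports Defs
begin

lemma dist3_le:
  fixes a b c a' b' c' :: real
  shows "dist (a, b, c) (a', b', c') \<le> \<bar>a - a'\<bar> + \<bar>b - b'\<bar> + \<bar>c - c'\<bar>"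
proof -
  have 1: "dist (b, c) (b', c') \<le> \<bar>b - b'\<bar> + \<bar>c - c'\<bar>"
    using sqrt_sum_squares_le_sum_abs[of "dist b b'" "dist c c'"]
    by (simp add: dist_Pair_Pair dist_real_def)
  have "dist (a, b, c) (a', b', c') \<le> \<bar>dist a a'\<bar> + \<bar>dist (b, c) (b', c')\<bar>"
    using sqrt_sum_squares_le_sum_abs[of "dist a a'" "dist (b,c) (b',c')"]
    by (simp add: dist_Pair_Pair)
  then show ?thesis using 1 by (simp add: dist_real_def)
qed

locale gsetting =
  fixes X :: "'a set" and G :: "'a \<Rightarrow> 'a \<Rightarrow> 'a \<Rightarrow> real" and T :: "'a \<Rightarrow> 'a"
    and a :: "'a \<Rightarrow> 'a \<Rightarrow> 'a \<Rightarrow> real" and h :: "real \<Rightarrow> real \<Rightarrow> real \<Rightarrow> real"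
  assumes GX: "G_metric X G" and symG: "symmetric_G X G"
    and TX: "\<forall>x\<in>X. T x \<in> X"
    and a_zero: "\<forall>x\<in>X. \<forall>y\<in>X. a x y y = 0"
    and h_usc: "usc3_nonneg h"
    and h_mono: "mono3_nonneg h"
    and h_lt: "\<forall>t>0. h t t t < t"
    and contr: "\<forall>x\<in>X. \<forall>y\<in>X. \<forall>z\<in>X. x \<noteq> y \<longrightarrow>
        G (T x) (T y) (T z) \<le>
          h (G x y z)
            (G x (T x) (T x) * G y (T y) (T y) * G z (T z) (T z) / (G x y z * G (T x) (T y) (T z)))
            (a x y z * G (T x) y z * G x (T y) z * G x y (T z))"
begin

lemma G1': "\<forall>x\<in>X. \<forall>y\<in>X. \<forall>z\<in>X. G x y z \<ge> 0"
  using GX[unfolded G_metric_def, THEN conjunct2, THEN conjunct1] .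
lemma G2': "\<forall>x\<in>X. G x x x = 0"
  using GX[unfolded G_metric_def, THEN conjunct2, THEN conjunct2, THEN conjunct1] .
lemma G3': "\<forall>x\<in>X. \<forall>y\<in>X. x \<noteq> y \<longrightarrow> G x x y > 0"
  using GX[unfolded G_metric_def, THEN conjunct2, THEN conjunct2, THEN conjunct2, THEN conjunct1] .
lemma G4': "\<forall>x\<in>X. \<forall>y\<in>X. \<forall>z\<in>X. G x y z = G x z y \<and> G x y z = G y x z \<and> G x y z = G y z x
        \<and> G x y z = G z x y \<and> G x y z = G z y x"
  using GX[unfolded G_metric_def, THEN conjunct2, THEN conjunct2, THEN conjunct2, THEN conjunct2, THEN conjunct2, THEN conjunct1] .
lemma G5': "\<forall>x\<in>X. \<forall>y\<in>X. \<forall>z\<in>X. \<forall>a\<in>X. G x y z \<le> G x a a + G a y z"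
  using GX[unfolded G_metric_def, THEN conjunct2, THEN conjunct2, THEN conjunct2, THEN conjunct2, THEN conjunct2, THEN conjunct2] .

lemma p_nonneg: "x \<in> X \<Longrightarrow> y \<in> X \<Longrightarrow> 0 \<le> G x y y"
  using G1' by blast

lemma p_zero: "x \<in> X \<Longrightarrow> G x x x = 0"
  using G2' by blast

lemma p_pos: "x \<in> X \<Longrightarrow> y \<in> X \<Longrightarrow> x \<noteq> y \<Longrightarrow> 0 < G x y y"
proof -
  assume x: "x \<in> X" and y: "y \<in> X" and ne: "x \<noteq> y"
  have "G x y y = G x x y" using symG x y unfolding symmetric_G_def by blast
  moreover have "G x x y > 0" using G3' x y ne by blast
  ultimately show ?thesis by simp
qed

lemma p_eq0: "x \<in> X \<Longrightarrow> y \<in> X \<Longrightarrow> G x y y \<le> 0 \<Longrightarrow> x = y"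
  using p_pos by force

lemma p_sym: "x \<in> X \<Longrightarrow> y \<in> X \<Longrightarrow> G x y y = G y x x"
proof -
  assume x: "x \<in> X" and y: "y \<in> X"
  have "G x y y = G x x y" using symG x y unfolding symmetric_G_def by blast
  also have "\<dots> = G y x x" using G4' x y by blast
  finally show ?thesis .
qed

lemma p_tri: "x \<in> X \<Longrightarrow> y \<in> X \<Longrightarrow> z \<in> X \<Longrightarrow> G x z z \<le> G x y y + G y z z"
  using G5' by blast

lemma contr_pair:
  assumes "x \<in> X" "y \<in> X" "x \<noteq> y"
  shows "G (T x) (T y) (T y) \<le> h (G x y y)
     (G x (T x) (T x) * G y (T y) (T y) * G y (T y) (T y) / (G x y y * G (T x) (T y) (T y))) 0"
proof -
  have "a x y y = 0" using a_zero assms by blast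
  then show ?thesis using contr[rule_format, OF assms(1,2,2,3)] by simp
qed

lemma hmono: "0 \<le> p \<Longrightarrow> p \<le> p' \<Longrightarrow> 0 \<le> q \<Longrightarrow> q \<le> q' \<Longrightarrow> 0 \<le> r \<Longrightarrow> r \<le> r'
   \<Longrightarrow> h p q r \<le> h p' q' r'"
  using h_mono unfolding mono3_nonneg_def by (metis (no_types))

lemma usc_at:
  assumes "0 \<le> p" "0 \<le> q" "0 \<le> r" "h p q r < c"
  obtains e where "e > 0" "\<And>p' q' r'. 0 \<le> p' \<Longrightarrow> 0 \<le> q' \<Longrightarrow> 0 \<le> r' \<Longrightarrow>
     \<bar>p' - p\<bar> + \<bar>q' - q\<bar> + \<bar>r' - r\<bar> < e \<Longrightarrow> h p' q' r' < c"
proof -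
  from h_usc assms obtain d where d: "d > 0" "\<forall>p'\<in>{0..}. \<forall>q'\<in>{0..}. \<forall>r'\<in>{0..}.
          dist (p', q', r') (p, q, r) < d \<longrightarrow> h p' q' r' < c"
  proof -
    have "\<forall>c. h p q r < c \<longrightarrow>
       (\<exists>d>0. \<forall>p'\<in>{0..}. \<forall>q'\<in>{0..}. \<forall>r'\<in>{0..}.
          dist (p', q', r') (p, q, r) < d \<longrightarrow> h p' q' r' < c)"
      using h_usc assms(1-3) unfolding usc3_nonneg_def by simp
    then show ?thesis using assms(4) that by blast
  qed
  show ?thesis
  proof (rule that[OF d(1)])
    fix p' q' r' :: real
    assume "0 \<le> p'" "0 \<le> q'" "0 \<le> r'" "\<bar>p' - p\<bar> + \<bar>q' - q\<bar> + \<bar>r' - r\<bar> < d"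
    then have "dist (p', q', r') (p, q, r) < d" using dist3_le[of p' q' r' p q r] by linarith
    then show "h p' q' r' < c" using d(2) \<open>0 \<le> p'\<close> \<open>0 \<le> q'\<close> \<open>0 \<le> r'\<close> by simp
  qed
qed

lemma unique_fixed:
  assumes "u \<in> X" "v \<in> X" "T u = u" "T v = v" shows "u = v"
proof (rule ccontr)
  assume ne: "u \<noteq> v"
  let ?t = "G u v v"
  have t: "?t > 0" using p_pos assms ne by blast
  have "?t \<le> h ?t 0 0" using contr_pair[OF assms(1,2) ne] assms p_zero by simp
  also have "\<dots> \<le> h ?t ?t ?t" using t by (intro hmono) auto
  also have "\<dots> < ?t" using h_lt t by blast
  finally show False by simp
qed


lemma orb_in: "x0 \<in> X \<Longrightarrow> (T ^^ n) x0 \<in> X"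
  by (induction n) (auto simp: TX)

definition dd :: "'a \<Rightarrow> nat \<Rightarrow> real" where
  "dd x0 n = G ((T ^^ n) x0) ((T ^^ Suc n) x0) ((T ^^ Suc n) x0)"

lemma dd_nonneg: "x0 \<in> X \<Longrightarrow> 0 \<le> dd x0 n"
  unfolding dd_def using p_nonneg orb_in by blast

lemma dd_step:
  assumes x0: "x0 \<in> X"
  shows "dd x0 (Suc n) \<le> dd x0 n \<and> (0 < dd x0 n \<longrightarrow> dd x0 (Suc n) \<le> h (dd x0 n) (dd x0 n) (dd x0 n))"
proof -
  define x where "x = (T ^^ n) x0"
  define y where "y = (T ^^ Suc n) x0"
  define z where "z = (T ^^ Suc (Suc n)) x0"
  have Tx: "T x = y" and Ty: "T y = z" unfolding x_def y_def z_def by simp_all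
  have xX: "x \<in> X" and yX: "y \<in> X" and zX: "z \<in> X" unfolding x_def y_def z_def using orb_in x0 by blast+
  have d0: "dd x0 n = G x y y" and d1: "dd x0 (Suc n) = G y z z" unfolding dd_def x_def y_def z_def by simp_all
  show ?thesis
  proof (cases "x = y")
    case True
    then have "z = y" using Tx Ty by simp
    then show ?thesis using d0 d1 True p_zero yX by simp
  next
    case False
    have pos: "G x y y > 0" using p_pos xX yX False by blast
    have d1n: "0 \<le> G y z z" using p_nonneg yX zX by blast
    have q: "G x y y * G y z z * G y z z / (G x y y * G y z z) = G y z z"
      using pos by (cases "G y z z = 0") (simp_all add: field_simps)
    have main: "G y z z \<le> h (G x y y) (G y z z) 0"
      using contr_pair[OF xX yX False] Tx Ty q by simp
    have le: "G y z z \<le> G x y y"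
    proof (rule ccontr)
      assume "\<not> ?thesis"
      then have lt: "G x y y < G y z z" by simp
      have "h (G x y y) (G y z z) 0 \<le> h (G y z z) (G y z z) (G y z z)"
        using pos lt d1n by (intro hmono) auto
      also have "\<dots> < G y z z" using h_lt pos lt by auto
      finally show False using main by simp
    qed
    have "h (G x y y) (G y z z) 0 \<le> h (G x y y) (G x y y) (G x y y)"
      using pos le d1n by (intro hmono) auto
    then show ?thesis using main le d0 d1 by simp
  qed
qed

lemma dd_mono: assumes x0: "x0 \<in> X" and mn: "m \<le> n" shows "dd x0 n \<le> dd x0 m"
  using mn
proof (induction n rule: dec_induct)
  case base then show ?case by simp
next
  case (step k) then show ?case using dd_step[OF x0, of k] by linarith
qed

lemma dd_small:
  assumes x0: "x0 \<in> X" and eta: "\<eta> > 0"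
  shows "\<exists>N. \<forall>k\<ge>N. dd x0 k < \<eta>"
proof -
  have "\<exists>N. dd x0 N < \<eta>"
  proof (rule ccontr)
    assume "\<not> ?thesis"
    then have ge: "\<And>n. \<eta> \<le> dd x0 n" by (simp add: not_less)
    define r where "r = Inf (range (dd x0))"
    have bdd: "bdd_below (range (dd x0))" using dd_nonneg[OF x0] by (intro bdd_belowI) auto
    have rge: "\<eta> \<le> r" unfolding r_def using ge by (intro cInf_greatest) auto
    have rle: "\<And>n. r \<le> dd x0 n" unfolding r_def using bdd by (simp add: cInf_lower)
    have rpos: "r > 0" using rge eta by simp
    have "h r r r < r" using h_lt rpos by blast
    then obtain e where e: "e > 0" "\<And>p' q' r'. 0 \<le> p' \<Longrightarrow> 0 \<le> q' \<Longrightarrow> 0 \<le> r' \<Longrightarrow>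
      \<bar>p' - r\<bar> + \<bar>q' - r\<bar> + \<bar>r' - r\<bar> < e \<Longrightarrow> h p' q' r' < r"
      using usc_at[of r r r r] rpos by auto
    have "Inf (range (dd x0)) < r + e/3" using e(1) r_def by simp
    then obtain n where n: "dd x0 n < r + e/3" using cInf_less_iff[of "range (dd x0)"] bdd by auto
    have dn: "dd x0 n > 0" using ge[of n] eta by simp
    have "h (dd x0 n) (dd x0 n) (dd x0 n) < r"
      using e(2)[of "dd x0 n" "dd x0 n" "dd x0 n"] n rle[of n] dn by auto
    moreover have "dd x0 (Suc n) \<le> h (dd x0 n) (dd x0 n) (dd x0 n)" using dd_step[OF x0] dn by blast
    ultimately show False using rle[of "Suc n"] by simp
  qed
  then obtain N where "dd x0 N < \<eta>" by blast
  then show ?thesis using dd_mono[OF x0] by (meson le_less_trans)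
qed

lemma orb_Cauchy:
  assumes x0: "x0 \<in> X"
  shows "G_Cauchy G (\<lambda>n. (T ^^ n) x0)"
  unfolding G_Cauchy_def
proof (intro allI impI)
  fix \<epsilon> :: real assume \<epsilon>: "\<epsilon> > 0"
  define s where "s = (\<lambda>n. (T ^^ n) x0)"
  define p where "p = (\<lambda>i j. G (s i) (s j) (s j))"
  have sX: "\<And>n. s n \<in> X" unfolding s_def using orb_in x0 by blast
  have sS: "\<And>n. T (s n) = s (Suc n)" unfolding s_def by simp
  have pdd: "\<And>n. p n (Suc n) = dd x0 n" unfolding p_def s_def dd_def by simp
  have psym: "\<And>i j. p i j = p j i" unfolding p_def using p_sym sX by blast
  have ptri: "\<And>i j k. p i k \<le> p i j + p j k" unfolding p_def using p_tri sX by blast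
  have pnn: "\<And>i j. 0 \<le> p i j" unfolding p_def using p_nonneg sX by blast
  show "\<exists>N. \<forall>n m. N \<le> n \<and> N \<le> m \<longrightarrow> G ((T ^^ n) x0) ((T ^^ m) x0) ((T ^^ m) x0) < \<epsilon>"
  proof (rule ccontr)
    assume "\<not> ?thesis"
    then have H: "\<And>N. \<exists>n m. N \<le> n \<and> N \<le> m \<and> \<epsilon> \<le> p n m"
      unfolding p_def s_def by (auto simp: not_less)
    have key: "\<And>N. \<exists>n m. N \<le> n \<and> n < m \<and> \<epsilon> \<le> p n m"
    proof -
      fix N
      obtain n m where nm: "N \<le> n" "N \<le> m" "\<epsilon> \<le> p n m" using H by blast
      consider "n < m" | "n = m" | "m < n" by linarith
      then show "\<exists>n m. N \<le> n \<and> n < m \<and> \<epsilon> \<le> p n m"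
      proof cases
        case 1 then show ?thesis using nm by blast
      next
        case 2 then have "p n m = 0" unfolding p_def using p_zero sX by simp
        then show ?thesis using nm \<epsilon> by simp
      next
        case 3 then show ?thesis using nm psym by metis
      qed
    qed
    have hl: "h \<epsilon> \<epsilon> \<epsilon> < \<epsilon>" using h_lt \<epsilon> by blast
    define c where "c = (h \<epsilon> \<epsilon> \<epsilon> + \<epsilon>) / 2"
    have c1: "h \<epsilon> \<epsilon> \<epsilon> < c" and c2: "c < \<epsilon>" unfolding c_def using hl by simp_all
    obtain e where e: "e > 0" "\<And>p' q' r'. 0 \<le> p' \<Longrightarrow> 0 \<le> q' \<Longrightarrow> 0 \<le> r' \<Longrightarrow>
      \<bar>p' - \<epsilon>\<bar> + \<bar>q' - \<epsilon>\<bar> + \<bar>r' - \<epsilon>\<bar> < e \<Longrightarrow> h p' q' r' < c"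
      using usc_at[of \<epsilon> \<epsilon> \<epsilon> c] \<epsilon> c1 by auto
    define \<eta> where "\<eta> = min (\<epsilon>/4) (min (e/4) ((\<epsilon> - c)/3))"
    have \<eta>1: "\<eta> > 0" unfolding \<eta>_def using \<epsilon> e(1) c2 by simp
    have \<eta>2: "\<eta> \<le> \<epsilon>/4" unfolding \<eta>_def by simp
    have \<eta>3: "\<eta> \<le> e/4" unfolding \<eta>_def by simp
    have \<eta>4: "\<eta> \<le> (\<epsilon> - c)/3" unfolding \<eta>_def by (rule min.coboundedI2, rule min.cobounded2)
    note \<eta> = \<eta>1 \<eta>2 \<eta>3 \<eta>4
    obtain N where N: "\<And>k. k \<ge> N \<Longrightarrow> dd x0 k < \<eta>" using dd_small[OF x0 \<eta>(1)] by blast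
    obtain n m0 where nm0: "N \<le> n" "n < m0" "\<epsilon> \<le> p n m0" using key by blast
    define m where "m = (LEAST m. n < m \<and> \<epsilon> \<le> p n m)"
    have P0: "n < m0 \<and> \<epsilon> \<le> p n m0" using nm0 by simp
    have m: "n < m" "\<epsilon> \<le> p n m"
      using LeastI[of "\<lambda>m. n < m \<and> \<epsilon> \<le> p n m", OF P0] unfolding m_def by simp_all
    have mmin: "p n j < \<epsilon>" if j: "n < j" "j < m" for j
    proof -
      have "\<not> (n < j \<and> \<epsilon> \<le> p n j)"
        using not_less_Least[of j "\<lambda>m. n < m \<and> \<epsilon> \<le> p n m"] j(2) unfolding m_def by blast
      then show ?thesis using j(1) by simp
    qed
    have dn: "dd x0 n < \<eta>" using N nm0(1) by blast
    have mne: "m \<noteq> Suc n"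
    proof
      assume "m = Suc n"
      then have "p n m = dd x0 n" using pdd by simp
      then show False using m(2) dn \<eta>2 \<epsilon> by linarith
    qed
    define k where "k = m - 1"
    have k: "m = Suc k" "n < k" using m(1) mne unfolding k_def by arith+
    have pk: "p n k < \<epsilon>" using mmin k by simp
    have dk: "dd x0 k < \<eta>" using N nm0(1) k(2) by simp
    have dm: "dd x0 m < \<eta>" using N nm0(1) m(1) by simp
    define P where "P = p n m"
    define P' where "P' = p (Suc n) (Suc m)"
    have Pup: "P < \<epsilon> + \<eta>"
    proof -
      have "P \<le> p n k + p k m" using ptri[of n m k] P_def by simp
      moreover have "p k m = dd x0 k" using pdd[of k] k(1) by simp
      ultimately show ?thesis using pk dk by linarith
    qed
    have Ptri: "P \<le> dd x0 n + P' + dd x0 m"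
      using ptri[of n m "Suc n"] ptri[of "Suc n" m "Suc m"] psym[of "Suc m" m] pdd[of n] pdd[of m]
      unfolding P_def P'_def by linarith
    have ne: "s n \<noteq> s m"
    proof
      assume "s n = s m"
      then have "P = 0" unfolding P_def p_def using p_zero sX by simp
      then show False using m(2) \<epsilon> P_def by simp
    qed
    have cp: "P' \<le> h P (dd x0 n * dd x0 m * dd x0 m / (P * P')) 0"
      using contr_pair[OF sX sX ne] sS pdd[of n] pdd[of m] unfolding P_def P'_def p_def by simp
    have dnn: "0 \<le> dd x0 n" "0 \<le> dd x0 m" using dd_nonneg[OF x0] by auto
    have P'low: "P' \<ge> \<epsilon>/2" using Ptri dn dm \<eta> m(2) P_def by linarith
    have Ppos: "P > 0" using m(2) \<epsilon> P_def by simp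
    have b1: "dd x0 n \<le> P" using dn \<eta>2 m(2) P_def \<epsilon> by linarith
    have b2: "dd x0 m \<le> P" using dm \<eta>2 m(2) P_def \<epsilon> by linarith
    have b3: "dd x0 m \<le> P'" using dm \<eta>2 P'low \<epsilon> by linarith
    have A: "dd x0 n * dd x0 m * dd x0 m \<le> P * P * P'"
      using b1 b2 b3 dnn by (intro mult_mono) auto
    have P'pos: "P' > 0" using P'low \<epsilon> by linarith
    have BP: "P * P' > 0" using Ppos P'pos by simp
    have qle: "dd x0 n * dd x0 m * dd x0 m / (P * P') \<le> P"
    proof -
      have "P * P * P' = P * (P * P')" by (simp add: mult.assoc)
      then show ?thesis using A BP by (simp add: pos_divide_le_eq)
    qed
    have qnn: "0 \<le> dd x0 n * dd x0 m * dd x0 m / (P * P')"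
      using dnn BP by simp
    have "h P (dd x0 n * dd x0 m * dd x0 m / (P * P')) 0 \<le> h P P P"
      using qle qnn Ppos by (intro hmono) auto
    also have "h P P P < c"
    proof (rule e(2))
      show "0 \<le> P" "0 \<le> P" "0 \<le> P" using Ppos by simp_all
      have "\<bar>P - \<epsilon>\<bar> < \<eta>" using Pup m(2) P_def by simp
      then show "\<bar>P - \<epsilon>\<bar> + \<bar>P - \<epsilon>\<bar> + \<bar>P - \<epsilon>\<bar> < e" using \<eta>3 by linarith
    qed
    finally have "P' < c" using cp by simp
    then have "P < 2 * \<eta> + c" using Ptri dn dm by linarith
    moreover have "\<epsilon> \<le> P" using m(2) P_def by simp
    ultimately show False using \<eta>4 c2 by argo
  qed
qed

lemma limit_unique:
  assumes uX: "u \<in> X" and vX: "v \<in> X" and sX: "\<And>n. s n \<in> X"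
    and cu: "G_converges G s u" and cv: "G_converges G (\<lambda>i. s (Suc i)) v"
  shows "u = v"
proof -
  have "G u v v \<le> 0"
  proof (rule field_le_epsilon)
    fix e :: real assume e: "e > 0"
    obtain N1 where N1: "\<And>n m. N1 \<le> n \<and> N1 \<le> m \<Longrightarrow> G u (s n) (s m) < e/2"
      using cu e unfolding G_converges_def by (meson half_gt_zero)
    obtain N2 where N2: "\<And>n m. N2 \<le> n \<and> N2 \<le> m \<Longrightarrow> G v (s (Suc n)) (s (Suc m)) < e/2"
      using cv e unfolding G_converges_def by (meson half_gt_zero)
    define n where "n = max N1 N2"
    have 1: "G u (s (Suc n)) (s (Suc n)) < e/2" using N1[of "Suc n" "Suc n"] n_def by simp
    have 2: "G v (s (Suc n)) (s (Suc n)) < e/2" using N2[of n n] n_def by simp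
    have "G u v v \<le> G u (s (Suc n)) (s (Suc n)) + G (s (Suc n)) v v" using p_tri uX vX sX by blast
    also have "G (s (Suc n)) v v = G v (s (Suc n)) (s (Suc n))" using p_sym vX sX by metis
    finally show "G u v v \<le> 0 + e" using 1 2 by simp
  qed
  then show ?thesis using p_eq0 uX vX by blast
qed

lemma orbit_fixed:
  assumes x0: "x0 \<in> X" and compl: "orbitally_complete X G T" and cont: "orbitally_continuous X G T"
  shows "\<exists>u\<in>X. G_converges G (\<lambda>n. (T ^^ n) x0) u \<and> T u = u"
proof -
  have "range (\<lambda>n. (T ^^ n) x0) \<subseteq> orbit x0 T" unfolding orbit_def by auto
  then obtain u where u: "u \<in> X" "G_converges G (\<lambda>n. (T ^^ n) x0) u"
    using compl x0 orb_Cauchy[OF x0] unfolding orbitally_complete_def by blast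
  have sm: "strict_mono (id :: nat \<Rightarrow> nat)" by (simp add: strict_mono_def)
  have c0: "G_converges G (\<lambda>i. (T ^^ id i) x0) u" using u(2) by simp
  have "G_converges G (\<lambda>i. T ((T ^^ id i) x0)) (T u)"
    using cont x0 u(1) sm c0 unfolding orbitally_continuous_def by blast
  then have c2: "G_converges G (\<lambda>i. (T ^^ Suc i) x0) (T u)" by simp
  have "u = T u" using limit_unique[OF u(1) _ _ u(2) c2] TX u(1) orb_in[OF x0] by blast
  then show ?thesis using u by auto
qed
end

theorem theorem3:
  fixes X :: "'a set" and G :: "'a \<Rightarrow> 'a \<Rightarrow> 'a \<Rightarrow> real" and T :: "'a \<Rightarrow> 'a"
    and a :: "'a \<Rightarrow> 'a \<Rightarrow> 'a \<Rightarrow> real" and h :: "real \<Rightarrow> real \<Rightarrow> real \<Rightarrow> real"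
  assumes GX: "G_metric X G" and symG: "symmetric_G X G"
    and TX: "\<forall>x\<in>X. T x \<in> X"
    and compl: "orbitally_complete X G T"
    and cont: "orbitally_continuous X G T"
    and inj: "inj_on T X"
    and a_nonneg: "\<forall>x\<in>X. \<forall>y\<in>X. \<forall>z\<in>X. a x y z \<ge> 0"
    and a_zero: "\<forall>x\<in>X. \<forall>y\<in>X. a x y y = 0"
    and h_nonneg: "\<forall>p\<ge>0. \<forall>q\<ge>0. \<forall>r\<ge>0. h p q r \<ge> 0"
    and h_usc: "usc3_nonneg h"
    and h_mono: "mono3_nonneg h"
    and h_lt: "\<forall>t>0. h t t t < t"
    and contr: "\<forall>x\<in>X. \<forall>y\<in>X. \<forall>z\<in>X. x \<noteq> y \<longrightarrow>
        G (T x) (T y) (T z) \<le>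
          h (G x y z)
            (G x (T x) (T x) * G y (T y) (T y) * G z (T z) (T z) / (G x y z * G (T x) (T y) (T z)))
            (a x y z * G (T x) y z * G x (T y) z * G x y (T z))"
  shows "(\<forall>x\<in>X. \<exists>u\<in>X. G_converges G (\<lambda>n. (T ^^ n) x) u \<and> T u = u) \<and>
         ((\<forall>x\<in>X. \<forall>y\<in>X. \<forall>z\<in>X. x \<noteq> y \<longrightarrow> a x y z \<le> 1 / (G x y z * G (T x) (T y) (T z)))
            \<longrightarrow> (\<exists>!u. u \<in> X \<and> T u = u))"
proof -
  interpret gsetting X G T a h
    using GX symG TX a_zero h_usc h_mono h_lt contr by unfold_locales
  have P1: "\<forall>x\<in>X. \<exists>u\<in>X. G_converges G (\<lambda>n. (T ^^ n) x) u \<and> T u = u"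
    using orbit_fixed compl cont by blast
  have "X \<noteq> {}" using GX unfolding G_metric_def by blast
  then obtain x0 where "x0 \<in> X" by blast
  then obtain u where "u \<in> X" "T u = u" using P1 by blast
  then have "\<exists>!u. u \<in> X \<and> T u = u" using unique_fixed by blast
  then show ?thesis using P1 by blast
qed

end
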